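(* Let $R$ be a commutative ring which either has finitely many maximal ideals or whose set of minimal prime ideals $\operatorname{Min}(R)$ is quasi-compact in the Zariski topology. Then the following are equivalent: (i) $R$ is a GPP-ring; (ii) $R$ is a GPF-ring; (iii) $R$ is a quasi p.f. ring.
   Context: $R$ is a GPP-ring (resp. GPF-ring) if for each $f\in R$ there is $n\geq1$ with $Rf^n$ a projective (resp. flat) $R$-module. An ideal $I$ is quasi-pure if for each $f\in I$ there is $g\in I$ with $f(1-g)$ nilpotent; $R$ is a quasi p.f. ring if $\operatorname{Ann}(f)$ is quasi-pure for all $f\in R$. *)

theory Defs
  imports Main
begin

text \<open>Commutative rings are modelled by the type class comm_ring_1 (the ring is the
whole type). Ideals, prime/maximal/minimal prime ideals are sets of ring elements.\<close>

definition ring_ideal :: "'a::comm_ring_1 set \<Rightarrow> bool" where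
  "ring_ideal I \<longleftrightarrow> 0 \<in> I \<and> (\<forall>x\<in>I. \<forall>y\<in>I. x + y \<in> I) \<and> (\<forall>r. \<forall>x\<in>I. r * x \<in> I)"

definition prime_ideal :: "'a::comm_ring_1 set \<Rightarrow> bool" where
  "prime_ideal P \<longleftrightarrow> ring_ideal P \<and> P \<noteq> UNIV \<and> (\<forall>x y. x * y \<in> P \<longrightarrow> x \<in> P \<or> y \<in> P)"

definition maximal_ideal :: "'a::comm_ring_1 set \<Rightarrow> bool" where
  "maximal_ideal M \<longleftrightarrow> ring_ideal M \<and> M \<noteq> UNIV \<and>
     (\<forall>J. ring_ideal J \<and> M \<subseteq> J \<longrightarrow> J = M \<or> J = UNIV)"

definition minimal_prime :: "'a::comm_ring_1 set \<Rightarrow> bool" where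
  "minimal_prime P \<longleftrightarrow> prime_ideal P \<and> (\<forall>Q. prime_ideal Q \<and> Q \<subseteq> P \<longrightarrow> Q = P)"

text \<open>Min(R) with the subspace topology of the Zariski topology on Spec(R): the open sets of
Spec(R) are exactly the sets D(S) = {P. \<not> S \<subseteq> P}, S \<subseteq> R.\<close>

definition Min_quasi_compact :: "'a::comm_ring_1 itself \<Rightarrow> bool" where
  "Min_quasi_compact _ \<longleftrightarrow>
     (\<forall>\<S> :: 'a set set.
        (\<forall>P. minimal_prime P \<longrightarrow> (\<exists>S\<in>\<S>. \<not> S \<subseteq> P)) \<longrightarrow>
        (\<exists>\<F>\<subseteq>\<S>. finite \<F> \<and> (\<forall>P. minimal_prime P \<longrightarrow> (\<exists>S\<in>\<F>. \<not> S \<subseteq> P))))"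

definition nilpotent_elt :: "'a::comm_ring_1 \<Rightarrow> bool" where
  "nilpotent_elt x \<longleftrightarrow> (\<exists>k::nat. x ^ k = 0)"

definition Ann :: "'a::comm_ring_1 \<Rightarrow> 'a set" where
  "Ann f = {x. x * f = 0}"

definition quasi_pure :: "'a::comm_ring_1 set \<Rightarrow> bool" where
  "quasi_pure I \<longleftrightarrow> (\<forall>f\<in>I. \<exists>g\<in>I. nilpotent_elt (f * (1 - g)))"

definition quasi_pf_ring :: "'a::comm_ring_1 itself \<Rightarrow> bool" where
  "quasi_pf_ring _ \<longleftrightarrow> (\<forall>f::'a. quasi_pure (Ann f))"

definition principal :: "'a::comm_ring_1 \<Rightarrow> 'a set" where
  "principal f = {r * f | r. True}"

text \<open>R-linear maps between R-submodules of R-modules; the free R-module R^(X) on an index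
set X is modelled as the finitely supported functions X \<rightarrow> R.\<close>

definition free_module :: "'a set \<Rightarrow> ('a \<Rightarrow> 'b::comm_ring_1) set" where
  "free_module X = {\<phi>. finite {x. \<phi> x \<noteq> 0} \<and> {x. \<phi> x \<noteq> 0} \<subseteq> X}"

text \<open>A submodule M of R is projective iff it is a direct summand (retract) of a free
R-module. Since M is generated by its own elements, free modules indexed by subsets of
the ring suffice.\<close>

definition projective_submodule :: "'a::comm_ring_1 set \<Rightarrow> bool" where
  "projective_submodule M \<longleftrightarrow>
     (\<exists>(X::'a set) (i::'a \<Rightarrow> ('a \<Rightarrow> 'a)) (p::('a \<Rightarrow> 'a) \<Rightarrow> 'a).
        (\<forall>m\<in>M. i m \<in> free_module X) \<and>
        (\<forall>m\<in>M. \<forall>m'\<in>M. i (m + m') = (\<lambda>x. i m x + i m' x)) \<and>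
        (\<forall>r. \<forall>m\<in>M. i (r * m) = (\<lambda>x. r * i m x)) \<and>
        (\<forall>\<phi>\<in>free_module X. p \<phi> \<in> M) \<and>
        (\<forall>\<phi>\<in>free_module X. \<forall>\<psi>\<in>free_module X. p (\<lambda>x. \<phi> x + \<psi> x) = p \<phi> + p \<psi>) \<and>
        (\<forall>r. \<forall>\<phi>\<in>free_module X. p (\<lambda>x. r * \<phi> x) = r * p \<phi>) \<and>
        (\<forall>m\<in>M. p (i m) = m))"

text \<open>Flatness of a submodule M of R, via the equational criterion of flatness
(no tensor products are available in the library): every relation
\<Sum> r_i m_i = 0 with m_i \<in> M is trivial.\<close>

definition flat_submodule :: "'a::comm_ring_1 set \<Rightarrow> bool" where
  "flat_submodule M \<longleftrightarrow>
     (\<forall>(n::nat) (r::nat \<Rightarrow> 'a) (m::nat \<Rightarrow> 'a).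
        (\<forall>i<n. m i \<in> M) \<and> (\<Sum>i<n. r i * m i) = 0 \<longrightarrow>
        (\<exists>(k::nat) (a::nat \<Rightarrow> nat \<Rightarrow> 'a) (y::nat \<Rightarrow> 'a).
           (\<forall>j<k. y j \<in> M) \<and>
           (\<forall>i<n. m i = (\<Sum>j<k. a i j * y j)) \<and>
           (\<forall>j<k. (\<Sum>i<n. r i * a i j) = 0)))"

definition GPP_ring :: "'a::comm_ring_1 itself \<Rightarrow> bool" where
  "GPP_ring _ \<longleftrightarrow> (\<forall>f::'a. \<exists>n\<ge>1. projective_submodule (principal (f ^ n)))"

definition GPF_ring :: "'a::comm_ring_1 itself \<Rightarrow> bool" where
  "GPF_ring _ \<longleftrightarrow> (\<forall>f::'a. \<exists>n\<ge>1. flat_submodule (principal (f ^ n)))"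

end

theory Submission
  imports Defs
begin


lemma ideal_mult: "ring_ideal I \<Longrightarrow> x \<in> I \<Longrightarrow> r * x \<in> I"
  by (simp add: ring_ideal_def)
lemma ideal_mult2: "ring_ideal I \<Longrightarrow> x \<in> I \<Longrightarrow> x * r \<in> I"
  by (metis ideal_mult mult.commute)
lemma ideal_add: "ring_ideal I \<Longrightarrow> x \<in> I \<Longrightarrow> y \<in> I \<Longrightarrow> x + y \<in> I"
  by (simp add: ring_ideal_def)
lemma ideal_zero: "ring_ideal I \<Longrightarrow> 0 \<in> I"
  by (simp add: ring_ideal_def)
lemma ideal_neg: "ring_ideal I \<Longrightarrow> x \<in> I \<Longrightarrow> - x \<in> I"
  by (metis ideal_mult mult_minus1)
lemma ideal_diff: "ring_ideal I \<Longrightarrow> x \<in> I \<Longrightarrow> y \<in> I \<Longrightarrow> x - y \<in> I"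
  by (metis ideal_add ideal_neg diff_conv_add_uminus)
lemma ideal_UNIV: "ring_ideal I \<Longrightarrow> 1 \<in> I \<Longrightarrow> I = UNIV"
  by (metis UNIV_eq_I ideal_mult mult.right_neutral)

lemma maximal_prime: assumes "maximal_ideal M" shows "prime_ideal M"
proof -
  have I: "ring_ideal M" and NU: "M \<noteq> UNIV" using assms by (auto simp: maximal_ideal_def)
  have "x \<in> M \<or> y \<in> M" if xy: "x * y \<in> M" for x y
  proof (rule ccontr)
    assume "\<not> (x \<in> M \<or> y \<in> M)"
    hence x: "x \<notin> M" and y: "y \<notin> M" by auto
    define J where "J = {m + r * x | m r. m \<in> M}"
    have J: "ring_ideal J" unfolding ring_ideal_def J_def
    proof (intro conjI ballI allI)
      have "(0::'a) = 0 + 0 * x" by simp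
      thus "0 \<in> {m + r * x |m r. m \<in> M}" using ideal_zero[OF I] by blast
    next
      fix a b assume "a \<in> {m + r * x |m r. m \<in> M}" "b \<in> {m + r * x |m r. m \<in> M}"
      then obtain m1 r1 m2 r2 where "a = m1 + r1 * x" "b = m2 + r2 * x" "m1 \<in> M" "m2 \<in> M" by auto
      hence "a + b = (m1 + m2) + (r1 + r2) * x" "m1 + m2 \<in> M" by (auto simp: algebra_simps ideal_add[OF I])
      thus "a + b \<in> {m + r * x |m r. m \<in> M}" by blast
    next
      fix s a assume "a \<in> {m + r * x |m r. m \<in> M}"
      then obtain m1 r1 where "a = m1 + r1 * x" "m1 \<in> M" by auto
      hence "s * a = (s * m1) + (s * r1) * x" "s * m1 \<in> M" by (auto simp: algebra_simps intro: ideal_mult2[OF I])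
      thus "s * a \<in> {m + r * x |m r. m \<in> M}" by blast
    qed
    have "M \<subseteq> J" unfolding J_def by (force intro: exI[of _ 0])
    moreover have "x \<in> J" unfolding J_def using ideal_zero[OF I] by (force intro: exI[of _ 1])
    ultimately have "J = UNIV" using assms J x unfolding maximal_ideal_def by blast
    then obtain m r where mr: "1 = m + r * x" "m \<in> M" unfolding J_def by blast
    hence "y = m * y + r * (x * y)" by (metis mult_1 distrib_right mult.assoc mult.commute)
    hence "y \<in> M" using mr xy I by (metis ideal_add ideal_mult ideal_mult2)
    thus False using y by simp
  qed
  thus ?thesis using I NU by (simp add: prime_ideal_def)
qed

lemma prime_notin_pow: "prime_ideal P \<Longrightarrow> x \<notin> P \<Longrightarrow> x ^ k \<notin> P"
proof (induction k)
  case 0 thus ?case using ideal_UNIV by (auto simp: prime_ideal_def)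
next
  case (Suc k) thus ?case by (auto simp: prime_ideal_def)
qed

lemma prime_nilp: "prime_ideal P \<Longrightarrow> x ^ k = 0 \<Longrightarrow> x \<in> P"
  using prime_notin_pow ideal_zero by (metis prime_ideal_def)

lemma prime_one_minus: "prime_ideal P \<Longrightarrow> g \<in> P \<Longrightarrow> 1 - g \<notin> P"
  by (metis diff_add_cancel ideal_UNIV ideal_add prime_ideal_def)



lemma zorn_ideal:
  fixes J :: "'a::comm_ring_1 set"
  assumes "ring_ideal J" "J \<inter> S = {}"
  shows "\<exists>Q. ring_ideal Q \<and> J \<subseteq> Q \<and> Q \<inter> S = {} \<and>
    (\<forall>Q'. ring_ideal Q' \<and> Q \<subseteq> Q' \<and> Q' \<inter> S = {} \<longrightarrow> Q' = Q)"
proof -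
  define A where "A = {Q. ring_ideal Q \<and> J \<subseteq> Q \<and> Q \<inter> S = {}}"
  have "\<forall>C\<in>chains A. \<exists>U\<in>A. \<forall>X\<in>C. X \<subseteq> U"
  proof
    fix C assume C: "C \<in> chains A"
    show "\<exists>U\<in>A. \<forall>X\<in>C. X \<subseteq> U"
    proof (cases "C = {}")
      case True thus ?thesis using assms by (auto simp: A_def)
    next
      case False
      have sub: "C \<subseteq> A" using chainsD2[OF C] .
      have "ring_ideal (\<Union>C)" unfolding ring_ideal_def
      proof (intro conjI ballI allI)
        show "0 \<in> \<Union>C" using False sub by (auto simp: A_def ring_ideal_def)
      next
        fix a b assume "a \<in> \<Union>C" "b \<in> \<Union>C"
        then obtain X Y where XY: "X \<in> C" "Y \<in> C" "a \<in> X" "b \<in> Y" by auto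
        from chainsD[OF C XY(1,2)] show "a + b \<in> \<Union>C"
        proof
          assume "X \<subseteq> Y" thus ?thesis using XY sub by (auto simp: A_def intro!: ideal_add)
        next
          assume "Y \<subseteq> X" thus ?thesis using XY sub by (auto simp: A_def intro!: ideal_add)
        qed
      next
        fix r a assume "a \<in> \<Union>C"
        then obtain X where "X \<in> C" "a \<in> X" by auto
        thus "r * a \<in> \<Union>C" using sub by (auto simp: A_def intro!: ideal_mult)
      qed
      moreover have "J \<subseteq> \<Union>C" "\<Union>C \<inter> S = {}" using False sub by (auto simp: A_def)
      ultimately show ?thesis by (auto simp: A_def)
    qed
  qed
  from Zorn_Lemma2[OF this] obtain M where M: "M \<in> A" "\<forall>X\<in>A. M \<subseteq> X \<longrightarrow> X = M" by blast
  have M1: "ring_ideal M" "J \<subseteq> M" "M \<inter> S = {}" using M(1) by (auto simp: A_def)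
  moreover have "\<forall>Q'. ring_ideal Q' \<and> M \<subseteq> Q' \<and> Q' \<inter> S = {} \<longrightarrow> Q' = M"
  proof (intro allI impI)
    fix Q' assume Q': "ring_ideal Q' \<and> M \<subseteq> Q' \<and> Q' \<inter> S = {}"
    hence "Q' \<in> A" using M1(2) unfolding A_def by blast
    thus "Q' = M" using M(2) Q' by blast
  qed
  ultimately show ?thesis by blast
qed

lemma exists_maximal:
  fixes J :: "'a::comm_ring_1 set"
  assumes "ring_ideal J" "1 \<notin> J"
  shows "\<exists>M. maximal_ideal M \<and> J \<subseteq> M"
proof -
  from zorn_ideal[OF assms(1), of "{1}"] assms(2) obtain Q where
    Q: "ring_ideal Q" "J \<subseteq> Q" "1 \<notin> Q" "\<forall>Q'. ring_ideal Q' \<and> Q \<subseteq> Q' \<and> 1 \<notin> Q' \<longrightarrow> Q' = Q"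
    by auto
  have "maximal_ideal Q" unfolding maximal_ideal_def
    using Q ideal_UNIV by blast
  thus ?thesis using Q by blast
qed

lemma one_in_ideal:
  fixes J :: "'a::comm_ring_1 set"
  assumes "ring_ideal J" "\<And>M. maximal_ideal M \<Longrightarrow> \<exists>z\<in>J. z \<notin> M"
  shows "1 \<in> J"
  using exists_maximal[OF assms(1)] assms(2) by blast

lemma ideal_plus_elem:
  fixes M :: "'a::comm_ring_1 set"
  assumes I: "ring_ideal M"
  shows "ring_ideal {m + r * x | m r. m \<in> M}" "M \<subseteq> {m + r * x | m r. m \<in> M}"
    "x \<in> {m + r * x | m r. m \<in> M}"
proof -
  show "ring_ideal {m + r * x | m r. m \<in> M}" unfolding ring_ideal_def
  proof (intro conjI ballI allI)
    have "(0::'a) = 0 + 0 * x" by simp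
    thus "0 \<in> {m + r * x |m r. m \<in> M}" using ideal_zero[OF I] by blast
  next
    fix a b assume "a \<in> {m + r * x |m r. m \<in> M}" "b \<in> {m + r * x |m r. m \<in> M}"
    then obtain m1 r1 m2 r2 where "a = m1 + r1 * x" "b = m2 + r2 * x" "m1 \<in> M" "m2 \<in> M" by auto
    hence "a + b = (m1 + m2) + (r1 + r2) * x" "m1 + m2 \<in> M" by (auto simp: algebra_simps ideal_add[OF I])
    thus "a + b \<in> {m + r * x |m r. m \<in> M}" by blast
  next
    fix s a assume "a \<in> {m + r * x |m r. m \<in> M}"
    then obtain m1 r1 where "a = m1 + r1 * x" "m1 \<in> M" by auto
    hence "s * a = (s * m1) + (s * r1) * x" "s * m1 \<in> M" by (auto simp: algebra_simps intro: ideal_mult2[OF I])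
    thus "s * a \<in> {m + r * x |m r. m \<in> M}" by blast
  qed
  show "M \<subseteq> {m + r * x | m r. m \<in> M}" by (force intro: exI[of _ 0])
  have "x = 0 + 1 * x" by simp
  thus "x \<in> {m + r * x | m r. m \<in> M}" using ideal_zero[OF I] by blast
qed

lemma exists_prime_disjoint:
  fixes S :: "'a::comm_ring_1 set"
  assumes "1 \<in> S" "0 \<notin> S" "\<And>a b. a \<in> S \<Longrightarrow> b \<in> S \<Longrightarrow> a * b \<in> S"
  shows "\<exists>Q. prime_ideal Q \<and> Q \<inter> S = {}"
proof -
  have "ring_ideal {0::'a}" by (simp add: ring_ideal_def)
  from zorn_ideal[OF this, of S] assms(2) obtain Q where
    Q: "ring_ideal Q" "Q \<inter> S = {}" "\<forall>Q'. ring_ideal Q' \<and> Q \<subseteq> Q' \<and> Q' \<inter> S = {} \<longrightarrow> Q' = Q"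
    by auto
  have "x \<in> Q \<or> y \<in> Q" if xy: "x * y \<in> Q" for x y
  proof (rule ccontr)
    assume "\<not> (x \<in> Q \<or> y \<in> Q)"
    hence x: "x \<notin> Q" and y: "y \<notin> Q" by auto
    have "{m + r * x | m r. m \<in> Q} \<inter> S \<noteq> {}"
      using Q(3) ideal_plus_elem[OF Q(1), of x] x by blast
    then obtain m1 r1 where 1: "m1 + r1 * x \<in> S" "m1 \<in> Q" by blast
    have "{m + r * y | m r. m \<in> Q} \<inter> S \<noteq> {}"
      using Q(3) ideal_plus_elem[OF Q(1), of y] y by blast
    then obtain m2 r2 where 2: "m2 + r2 * y \<in> S" "m2 \<in> Q" by blast
    have "(m1 + r1 * x) * (m2 + r2 * y) = m1 * (m2 + r2 * y) + m2 * (r1 * x) + (r1 * r2) * (x * y)"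
      by (simp add: algebra_simps)
    also have "\<dots> \<in> Q" using 1 2 xy Q(1) by (metis ideal_add ideal_mult ideal_mult2)
    finally show False using assms(3)[OF 1(1) 2(1)] Q(2) by blast
  qed
  moreover have "Q \<noteq> UNIV" using Q(2) assms(1) by blast
  ultimately have "prime_ideal Q" using Q(1) unfolding prime_ideal_def by blast
  thus ?thesis using Q(2) by blast
qed

lemma exists_minimal_below:
  fixes Q :: "'a::comm_ring_1 set"
  assumes "prime_ideal Q"
  shows "\<exists>P. minimal_prime P \<and> P \<subseteq> Q"
proof -
  define A where "A = {- P | P. prime_ideal P \<and> P \<subseteq> Q}"
  have "\<forall>C\<in>chains A. \<exists>U\<in>A. \<forall>X\<in>C. X \<subseteq> U"
  proof
    fix C assume C: "C \<in> chains A"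
    show "\<exists>U\<in>A. \<forall>X\<in>C. X \<subseteq> U"
    proof (cases "C = {}")
      case True thus ?thesis using assms by (auto simp: A_def)
    next
      case False
      have sub: "C \<subseteq> A" using chainsD2[OF C] .
      define P where "P = - \<Union>C"
      have mem: "X \<in> C \<Longrightarrow> prime_ideal (- X) \<and> - X \<subseteq> Q" for X
        using sub by (auto simp: A_def)
      have Pm: "z \<in> P \<longleftrightarrow> (\<forall>X\<in>C. z \<in> - X)" for z unfolding P_def by auto
      have memI: "ring_ideal (- X)" "- X \<noteq> UNIV" "\<And>a b. a * b \<in> - X \<Longrightarrow> a \<in> - X \<or> b \<in> - X"
        if "X \<in> C" for X using mem[OF that] unfolding prime_ideal_def by blast+
      have "prime_ideal P" unfolding prime_ideal_def ring_ideal_def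
      proof (intro conjI ballI allI impI)
        show "0 \<in> P" unfolding Pm
        proof
          fix X assume "X \<in> C" thus "0 \<in> - X" using memI(1) ideal_zero by blast
        qed
      next
        fix a b assume ab: "a \<in> P" "b \<in> P" show "a + b \<in> P" unfolding Pm
        proof
          fix X assume X: "X \<in> C"
          have "a \<in> - X" "b \<in> - X" using ab X Pm by blast+
          thus "a + b \<in> - X" using ideal_add[OF memI(1)[OF X]] by blast
        qed
      next
        fix r a assume a: "a \<in> P" show "r * a \<in> P" unfolding Pm
        proof
          fix X assume X: "X \<in> C"
          have "a \<in> - X" using a X Pm by blast
          thus "r * a \<in> - X" using ideal_mult[OF memI(1)[OF X]] by blast
        qed
      next
        obtain X where X: "X \<in> C" using False by auto
        hence "1 \<notin> - X" using memI(1,2)[OF X] ideal_UNIV by blast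
        thus "P \<noteq> UNIV" using Pm X by blast
      next
        fix a b assume ab: "a * b \<in> P"
        show "a \<in> P \<or> b \<in> P"
        proof (rule ccontr)
          assume "\<not> (a \<in> P \<or> b \<in> P)"
          then obtain X Y where XY: "X \<in> C" "Y \<in> C" "a \<notin> - X" "b \<notin> - Y" unfolding Pm by blast
          from chainsD[OF C XY(1,2)] show False
          proof
            assume "X \<subseteq> Y"
            hence "a \<notin> - Y" using XY by auto
            moreover have "a * b \<in> - Y" using ab XY(2) Pm by blast
            ultimately show False using memI(3)[OF XY(2)] XY(4) by blast
          next
            assume "Y \<subseteq> X"
            hence "b \<notin> - X" using XY by auto
            moreover have "a * b \<in> - X" using ab XY(1) Pm by blast
            ultimately show False using memI(3)[OF XY(1)] XY(3) by blast
          qed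
        qed
      qed
      moreover have "P \<subseteq> Q" using False mem Pm by blast
      ultimately have "- P \<in> A" unfolding A_def by blast
      moreover have "\<forall>X\<in>C. X \<subseteq> - P" unfolding P_def by auto
      ultimately show ?thesis by blast
    qed
  qed
  from Zorn_Lemma2[OF this] obtain M where M: "M \<in> A" "\<forall>X\<in>A. M \<subseteq> X \<longrightarrow> X = M" by blast
  then obtain P where P: "M = - P" "prime_ideal P" "P \<subseteq> Q" unfolding A_def by blast
  have "minimal_prime P" unfolding minimal_prime_def
  proof (intro conjI allI impI)
    fix P' assume "prime_ideal P' \<and> P' \<subseteq> P"
    hence "- P' \<in> A" "M \<subseteq> - P'" using P unfolding A_def by auto
    hence "- P' = M" using M by blast
    thus "P' = P" using P by auto
  qed (use P in auto)
  thus ?thesis using P by blast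
qed

lemma minimal_prime_nil:
  fixes P :: "'a::comm_ring_1 set"
  assumes "minimal_prime P" "x \<in> P"
  shows "\<exists>s k. s \<notin> P \<and> s * x ^ k = 0"
proof (rule ccontr)
  assume H: "\<not> ?thesis"
  have PP: "prime_ideal P" using assms by (simp add: minimal_prime_def)
  define S where "S = {s * x ^ k | s k. s \<notin> P}"
  have "1 \<notin> P" using PP ideal_UNIV by (metis prime_ideal_def)
  moreover have "(1::'a) = 1 * x ^ 0" by simp
  ultimately have "1 \<in> S" unfolding S_def by blast
  moreover have "0 \<notin> S" using H unfolding S_def by auto
  moreover have "a * b \<in> S" if ab: "a \<in> S" "b \<in> S" for a b
  proof -
    obtain s1 k1 s2 k2 where "a = s1 * x ^ k1" "b = s2 * x ^ k2" "s1 \<notin> P" "s2 \<notin> P"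
      using ab unfolding S_def by blast
    hence "a * b = (s1 * s2) * x ^ (k1 + k2)" "s1 * s2 \<notin> P"
      using PP by (auto simp: algebra_simps power_add prime_ideal_def)
    thus ?thesis unfolding S_def by blast
  qed
  ultimately obtain Q where Q: "prime_ideal Q" "Q \<inter> S = {}" using exists_prime_disjoint by metis
  have "Q \<subseteq> P"
  proof
    fix y assume "y \<in> Q"
    show "y \<in> P"
    proof (rule ccontr)
      assume "y \<notin> P"
      moreover have "y = y * x ^ 0" by simp
      ultimately have "y \<in> S" unfolding S_def by blast
      thus False using Q \<open>y \<in> Q\<close> by blast
    qed
  qed
  hence "Q = P" using assms Q by (simp add: minimal_prime_def)
  moreover have "x = 1 * x ^ 1" by simp
  hence "x \<in> S" unfolding S_def using \<open>1 \<notin> P\<close> by blast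
  ultimately show False using Q assms by blast
qed



lemma ann_ideal: "ring_ideal {x::'a::comm_ring_1. x * b = 0}"
  by (auto simp: ring_ideal_def algebra_simps)

lemma ideal_sum:
  fixes I K :: "'a::comm_ring_1 set"
  assumes I: "ring_ideal I" and K: "ring_ideal K"
  shows "ring_ideal {i + c | i c. i \<in> I \<and> c \<in> K}"
  unfolding ring_ideal_def
proof (intro conjI ballI allI)
  have "(0::'a) = 0 + 0" by simp
  thus "0 \<in> {i + c | i c. i \<in> I \<and> c \<in> K}" using ideal_zero[OF I] ideal_zero[OF K] by blast
next
  fix a b assume "a \<in> {i + c | i c. i \<in> I \<and> c \<in> K}" "b \<in> {i + c | i c. i \<in> I \<and> c \<in> K}"
  then obtain i1 c1 i2 c2 where "a = i1 + c1" "b = i2 + c2" "i1 \<in> I" "i2 \<in> I" "c1 \<in> K" "c2 \<in> K" by auto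
  hence "a + b = (i1 + i2) + (c1 + c2)" "i1 + i2 \<in> I" "c1 + c2 \<in> K"
    by (auto simp: algebra_simps ideal_add[OF I] ideal_add[OF K])
  thus "a + b \<in> {i + c | i c. i \<in> I \<and> c \<in> K}" by blast
next
  fix r a assume "a \<in> {i + c | i c. i \<in> I \<and> c \<in> K}"
  then obtain i1 c1 where "a = i1 + c1" "i1 \<in> I" "c1 \<in> K" by auto
  hence "r * a = (r * i1) + (r * c1)" "r * i1 \<in> I" "r * c1 \<in> K"
    by (auto simp: algebra_simps intro: ideal_mult2[OF I] ideal_mult2[OF K])
  thus "r * a \<in> {i + c | i c. i \<in> I \<and> c \<in> K}" by blast
qed

lemma main_idem:
  fixes a :: "'a::comm_ring_1"
  assumes T: "finite T" "\<forall>t\<in>T. t * a = 0"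
  and H: "\<And>m. maximal_ideal m \<Longrightarrow> (\<exists>t\<in>T. t \<notin> m) \<or> (\<forall>x. x * a = 0 \<longrightarrow> (\<exists>s. s \<notin> m \<and> s * x = 0))"
  shows "\<exists>u. u * a = 0 \<and> (\<forall>x. x * a = 0 \<longrightarrow> x * (1 - u) = 0)"
proof -
  have C1: "\<exists>v. v * a = 0 \<and> b * (1 - v) = 0" if b: "b * a = 0" for b
  proof -
    define J where "J = {i + c | i c. i \<in> {x. x * a = 0} \<and> c \<in> {x. x * b = 0}}"
    have J: "ring_ideal J" unfolding J_def by (intro ideal_sum ann_ideal)
    have "1 \<in> J"
    proof (rule one_in_ideal[OF J])
      fix m :: "'a set" assume m: "maximal_ideal m"
      from H[OF m] show "\<exists>z\<in>J. z \<notin> m"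
      proof
        assume "\<exists>t\<in>T. t \<notin> m"
        then obtain t where t: "t \<in> T" "t \<notin> m" by blast
        have "t = t + 0" "t \<in> {x. x * a = 0}" "(0::'a) \<in> {x. x * b = 0}" using t T by auto
        hence "t \<in> J" unfolding J_def by blast
        thus ?thesis using t by blast
      next
        assume "\<forall>x. x * a = 0 \<longrightarrow> (\<exists>s. s \<notin> m \<and> s * x = 0)"
        then obtain s where s: "s \<notin> m" "s * b = 0" using b by blast
        have "s = 0 + s" "s \<in> {x. x * b = 0}" "(0::'a) \<in> {x. x * a = 0}" using s by auto
        hence "s \<in> J" unfolding J_def by blast
        thus ?thesis using s by blast
      qed
    qed
    then obtain i c where ic: "1 = i + c" "i * a = 0" "c * b = 0" unfolding J_def by blast
    have "b * (1 - i) = c * b" using ic(1) by (metis add_diff_cancel_left' mult.commute)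
    thus ?thesis using ic by auto
  qed
  have C2: "finite T' \<Longrightarrow> \<forall>t\<in>T'. t * a = 0 \<Longrightarrow> \<exists>u. u * a = 0 \<and> (\<forall>t\<in>T'. t * (1 - u) = 0)" for T'
  proof (induction T' rule: finite_induct)
    case empty show ?case by (intro exI[of _ 0]) simp
  next
    case (insert b F)
    then obtain u where u: "u * a = 0" "\<forall>t\<in>F. t * (1 - u) = 0" by auto
    have "(b * (1 - u)) * a = 0" using insert.prems u
      by (metis (no_types, lifting) insertI1 mult.commute mult_zero_left mult.left_commute)
    from C1[OF this] obtain v where v: "v * a = 0" "b * (1 - u) * (1 - v) = 0" by blast
    define w where "w = u + v - u * v"
    have w1: "1 - w = (1 - u) * (1 - v)" unfolding w_def by (simp add: algebra_simps)
    have "w * a = u * a + v * a - u * (v * a)" unfolding w_def by (simp add: algebra_simps)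
    hence "w * a = 0" using u v by simp
    moreover have "\<forall>t\<in>insert b F. t * (1 - w) = 0"
      using u(2) v(2) unfolding w1 by (auto simp: mult.assoc[symmetric])
    ultimately show ?case by blast
  qed
  from C2[OF T] obtain u where u: "u * a = 0" "\<forall>t\<in>T. t * (1 - u) = 0" by blast
  have "x * (1 - u) = 0" if x: "x * a = 0" for x
  proof -
    have J: "ring_ideal {z. z * (x * (1 - u)) = 0}" by (rule ann_ideal)
    have "1 \<in> {z. z * (x * (1 - u)) = 0}"
    proof (rule one_in_ideal[OF J])
      fix m :: "'a set" assume m: "maximal_ideal m"
      from H[OF m] show "\<exists>z\<in>{z. z * (x * (1 - u)) = 0}. z \<notin> m"
      proof
        assume "\<exists>t\<in>T. t \<notin> m"
        then obtain t where t: "t \<in> T" "t \<notin> m" by blast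
        have "t * (x * (1 - u)) = x * (t * (1 - u))" by (simp add: algebra_simps)
        thus ?thesis using t u by auto
      next
        assume "\<forall>x. x * a = 0 \<longrightarrow> (\<exists>s. s \<notin> m \<and> s * x = 0)"
        then obtain s where s: "s \<notin> m" "s * x = 0" using x by blast
        have "s * (x * (1 - u)) = 0" using s by (simp add: mult.assoc[symmetric])
        thus ?thesis using s by blast
      qed
    qed
    thus ?thesis by simp
  qed
  thus ?thesis using u by blast
qed



lemma principal_mem: "m \<in> principal a \<longleftrightarrow> (\<exists>r. m = r * a)"
  by (auto simp: principal_def)

definition coef :: "'a::comm_ring_1 \<Rightarrow> 'a \<Rightarrow> 'a" where
  "coef a m = (SOME r. m = r * a)"

lemma coef: "m \<in> principal a \<Longrightarrow> m = coef a m * a"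
  unfolding coef_def principal_mem by (rule someI_ex)

lemma proj_of:
  fixes a u :: "'a::comm_ring_1"
  assumes u: "u * a = 0" "\<forall>x. x * a = 0 \<longrightarrow> x * (1 - u) = 0"
  shows "projective_submodule (principal a)"
proof -
  define e where "e = 1 - u"
  have wd: "r * e = r' * e" if "r * a = r' * a" for r r'
  proof -
    have "(r - r') * a = 0" using that by (simp add: algebra_simps)
    hence "(r - r') * e = 0" using u unfolding e_def by blast
    thus ?thesis by (simp add: algebra_simps)
  qed
  have ea: "e * a = a" unfolding e_def using u by (simp add: algebra_simps)
  define i where "i m = (\<lambda>x::'a. if x = 0 then coef a m * e else 0)" for m
  define p where "p \<phi> = \<phi> 0 * a" for \<phi> :: "'a \<Rightarrow> 'a"
  have "(\<forall>m\<in>principal a. i m \<in> free_module {0}) \<and>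
        (\<forall>m\<in>principal a. \<forall>m'\<in>principal a. i (m + m') = (\<lambda>x. i m x + i m' x)) \<and>
        (\<forall>r. \<forall>m\<in>principal a. i (r * m) = (\<lambda>x. r * i m x)) \<and>
        (\<forall>\<phi>\<in>free_module {0}. p \<phi> \<in> principal a) \<and>
        (\<forall>\<phi>\<in>free_module {0}. \<forall>\<psi>\<in>free_module {0}. p (\<lambda>x. \<phi> x + \<psi> x) = p \<phi> + p \<psi>) \<and>
        (\<forall>r. \<forall>\<phi>\<in>free_module {0}. p (\<lambda>x. r * \<phi> x) = r * p \<phi>) \<and>
        (\<forall>m\<in>principal a. p (i m) = m)"
  proof (intro conjI ballI allI)
    fix m assume "m \<in> principal a"
    have "{x. i m x \<noteq> 0} \<subseteq> {0}" unfolding i_def by auto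
    thus "i m \<in> free_module {0}" unfolding free_module_def using finite_subset by auto
  next
    fix m m' assume mm: "m \<in> principal a" "m' \<in> principal a"
    hence "m + m' \<in> principal a" unfolding principal_mem by (metis distrib_right)
    hence "coef a (m + m') * a = (coef a m + coef a m') * a"
      using coef[OF mm(1)] coef[OF mm(2)] coef[of "m + m'"] by (metis distrib_right)
    hence "coef a (m + m') * e = coef a m * e + coef a m' * e" using wd by (metis distrib_right)
    thus "i (m + m') = (\<lambda>x. i m x + i m' x)" unfolding i_def by auto
  next
    fix r m assume mm: "m \<in> principal a"
    hence "r * m \<in> principal a" unfolding principal_mem by (metis mult.assoc)
    hence "coef a (r * m) * a = (r * coef a m) * a"
      using coef[OF mm] coef[of "r * m"] by (metis mult.assoc)
    hence "coef a (r * m) * e = r * (coef a m * e)" using wd by (metis mult.assoc)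
    thus "i (r * m) = (\<lambda>x. r * i m x)" unfolding i_def by auto
  next
    fix \<phi> :: "'a \<Rightarrow> 'a" show "p \<phi> \<in> principal a" unfolding p_def principal_mem by blast
  next
    fix \<phi> \<psi> :: "'a \<Rightarrow> 'a" show "p (\<lambda>x. \<phi> x + \<psi> x) = p \<phi> + p \<psi>" unfolding p_def
      by (simp add: algebra_simps)
  next
    fix r and \<phi> :: "'a \<Rightarrow> 'a" show "p (\<lambda>x. r * \<phi> x) = r * p \<phi>" unfolding p_def
      by (simp add: algebra_simps)
  next
    fix m assume mm: "m \<in> principal a"
    have "p (i m) = coef a m * (e * a)" unfolding p_def i_def by (simp add: algebra_simps)
    also have "\<dots> = m" using ea coef[OF mm] by simp
    finally show "p (i m) = m" .
  qed
  thus ?thesis unfolding projective_submodule_def by blast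
qed

lemma proj_imp:
  fixes a :: "'a::comm_ring_1"
  assumes "projective_submodule (principal a)"
  shows "\<exists>e. e * a = a \<and> (\<forall>\<rho>. \<rho> * a = 0 \<longrightarrow> \<rho> * e = 0)"
proof -
  obtain X :: "'a set" and i :: "'a \<Rightarrow> 'a \<Rightarrow> 'a" and p where
    i1: "\<forall>m\<in>principal a. i m \<in> free_module X" and
    i3: "\<forall>r. \<forall>m\<in>principal a. i (r * m) = (\<lambda>x. r * i m x)" and
    p1: "\<forall>\<phi>\<in>free_module X. p \<phi> \<in> principal a" and
    p2: "\<forall>\<phi>\<in>free_module X. \<forall>\<psi>\<in>free_module X. p (\<lambda>x. \<phi> x + \<psi> x) = p \<phi> + p \<psi>" and
    p3: "\<forall>r. \<forall>\<phi>\<in>free_module X. p (\<lambda>x. r * \<phi> x) = r * p \<phi>" and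
    pi: "\<forall>m\<in>principal a. p (i m) = m"
    using assms unfolding projective_submodule_def by blast
  define \<delta> where "\<delta> x = (\<lambda>y. if y = x then (1::'a) else 0)" for x :: 'a
  have \<delta>: "x \<in> X \<Longrightarrow> \<delta> x \<in> free_module X" for x
  proof -
    assume x: "x \<in> X"
    have "{y. \<delta> x y \<noteq> 0} \<subseteq> {x}" unfolding \<delta>_def by auto
    thus ?thesis unfolding free_module_def using x finite_subset by auto
  qed
  have z: "(\<lambda>_. 0::'a) \<in> free_module X" unfolding free_module_def by simp
  have p0: "p (\<lambda>_. 0) = 0"
  proof -
    have "p (\<lambda>x. 0 * (\<lambda>_. 0::'a) x) = 0 * p (\<lambda>_. 0)" by (rule bspec[OF spec[OF p3] z])
    thus ?thesis by simp
  qed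
  have dec: "\<forall>\<psi>. {x. \<psi> x \<noteq> 0} \<subseteq> G \<longrightarrow> p \<psi> = (\<Sum>x\<in>G. \<psi> x * p (\<delta> x))"
    if "finite G" "G \<subseteq> X" for G
    using that
  proof (induction G rule: finite_induct)
    case empty
    show ?case
    proof (intro allI impI)
      fix \<psi> :: "'a \<Rightarrow> 'a" assume "{x. \<psi> x \<noteq> 0} \<subseteq> {}"
      hence "\<psi> = (\<lambda>_. 0)" by auto
      thus "p \<psi> = (\<Sum>x\<in>{}. \<psi> x * p (\<delta> x))" using p0 by simp
    qed
  next
    case (insert y G)
    show ?case
    proof (intro allI impI)
      fix \<psi> :: "'a \<Rightarrow> 'a" assume sup: "{x. \<psi> x \<noteq> 0} \<subseteq> insert y G"
      define \<psi>' where "\<psi>' = \<psi>(y := 0)"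
      have s': "{x. \<psi>' x \<noteq> 0} \<subseteq> G" using sup unfolding \<psi>'_def by auto
      have f': "\<psi>' \<in> free_module X" unfolding free_module_def
        using s' insert.hyps(1) insert.prems finite_subset by auto
      have fy: "(\<lambda>x. \<psi> y * \<delta> y x) \<in> free_module X" using p3 \<delta>[of y] insert.prems
      proof -
        have "{x. \<psi> y * \<delta> y x \<noteq> 0} \<subseteq> {y}" unfolding \<delta>_def by auto
        thus ?thesis unfolding free_module_def using insert.prems finite_subset by auto
      qed
      have eq: "\<psi> = (\<lambda>x. \<psi>' x + (\<lambda>x. \<psi> y * \<delta> y x) x)" unfolding \<psi>'_def \<delta>_def by auto
      have "p \<psi> = p \<psi>' + p (\<lambda>x. \<psi> y * \<delta> y x)"
        using p2 f' fy eq by metis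
      also have "p (\<lambda>x. \<psi> y * \<delta> y x) = \<psi> y * p (\<delta> y)" using p3 \<delta>[of y] insert.prems by auto
      also have "p \<psi>' = (\<Sum>x\<in>G. \<psi>' x * p (\<delta> x))" using insert.IH insert.prems s' by auto
      also have "(\<Sum>x\<in>G. \<psi>' x * p (\<delta> x)) = (\<Sum>x\<in>G. \<psi> x * p (\<delta> x))"
        unfolding \<psi>'_def using insert.hyps(2) by (intro sum.cong) auto
      finally show "p \<psi> = (\<Sum>x\<in>insert y G. \<psi> x * p (\<delta> x))"
        using insert.hyps by (simp add: add.commute)
    qed
  qed
  have aP: "a \<in> principal a" unfolding principal_mem by (intro exI[of _ 1]) simp
  define \<phi> where "\<phi> = i a"
  define F where "F = {x. \<phi> x \<noteq> 0}"
  have \<phi>f: "\<phi> \<in> free_module X" unfolding \<phi>_def using i1 aP by blast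
  hence F: "finite F" "F \<subseteq> X" unfolding F_def free_module_def by auto
  have "a = p \<phi>" unfolding \<phi>_def using pi aP by simp
  also have "\<dots> = (\<Sum>x\<in>F. \<phi> x * p (\<delta> x))" using dec[OF F] unfolding F_def by blast
  finally have a_eq: "a = (\<Sum>x\<in>F. \<phi> x * p (\<delta> x))" .
  define s where "s x = coef a (p (\<delta> x))" for x
  have ps: "x \<in> F \<Longrightarrow> p (\<delta> x) = s x * a" for x unfolding s_def
    using coef p1 \<delta> F(2) by blast
  define e where "e = (\<Sum>x\<in>F. \<phi> x * s x)"
  have "e * a = a" unfolding e_def sum_distrib_right
    by (subst a_eq, intro sum.cong) (auto simp: ps mult.assoc)
  moreover have "\<rho> * e = 0" if \<rho>: "\<rho> * a = 0" for \<rho>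
  proof -
    have "i (\<rho> * a) = (\<lambda>x. \<rho> * \<phi> x)" using i3 aP unfolding \<phi>_def by blast
    moreover have "i (0 * a) = (\<lambda>x. 0 * \<phi> x)" using i3 aP unfolding \<phi>_def by blast
    ultimately have "(\<lambda>x. \<rho> * \<phi> x) = (\<lambda>x. 0)" using \<rho> by simp
    hence "\<rho> * \<phi> x = 0" for x by metis
    hence "\<rho> * (\<phi> x * s x) = 0" for x by (simp add: mult.assoc[symmetric])
    thus ?thesis unfolding e_def sum_distrib_left by simp
  qed
  ultimately show ?thesis by blast
qed

lemma sum1: "(\<Sum>j<(1::nat). g j) = (g 0 :: 'a::comm_monoid_add)" by simp

lemma flat_of:
  fixes a e :: "'a::comm_ring_1"
  assumes ea: "e * a = a" and ann: "\<forall>\<rho>. \<rho> * a = 0 \<longrightarrow> \<rho> * e = 0"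
  shows "flat_submodule (principal a)"
  unfolding flat_submodule_def
proof (intro allI impI)
  fix n :: nat and r m :: "nat \<Rightarrow> 'a"
  assume H: "(\<forall>i<n. m i \<in> principal a) \<and> (\<Sum>i<n. r i * m i) = 0"
  define c where "c i = coef a (m i)" for i
  have mc: "i < n \<Longrightarrow> m i = c i * a" for i unfolding c_def using H coef by blast
  have aP: "a \<in> principal a" unfolding principal_mem by (intro exI[of _ 1]) simp
  have "(\<Sum>i<n. r i * c i) * a = (\<Sum>i<n. r i * m i)" unfolding sum_distrib_right
    by (intro sum.cong) (auto simp: mc mult.assoc)
  hence "(\<Sum>i<n. r i * c i) * e = 0" using H ann by simp
  hence "(\<Sum>i<n. r i * (c i * e)) = 0" by (simp add: sum_distrib_right mult.assoc)
  moreover have "\<forall>i<n. m i = (\<Sum>j<(1::nat). (c i * e) * a)" unfolding sum1 using mc ea by (simp add: mult.assoc)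
  ultimately show "\<exists>(k::nat) (A::nat \<Rightarrow> nat \<Rightarrow> 'a) (y::nat \<Rightarrow> 'a).
           (\<forall>j<k. y j \<in> principal a) \<and>
           (\<forall>i<n. m i = (\<Sum>j<k. A i j * y j)) \<and>
           (\<forall>j<k. (\<Sum>i<n. r i * A i j) = 0)"
    using aP by (intro exI[of _ 1] exI[of _ "\<lambda>i j. c i * e"] exI[of _ "\<lambda>j. a"]) (auto simp only: sum1)
qed

lemma flat_ann:
  fixes x f :: "'a::comm_ring_1"
  assumes fl: "flat_submodule (principal (x ^ n))" and n: "n \<ge> 1" and xf: "x * f = 0"
  shows "\<exists>g. g * f = 0 \<and> nilpotent_elt (x * (1 - g))"
proof -
  have xnf: "f * x ^ n = 0"
  proof -
    obtain n' where "n = Suc n'" using n by (cases n) auto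
    hence "f * x ^ n = (x * f) * x ^ n'" by (simp add: algebra_simps)
    thus ?thesis using xf by simp
  qed
  have xP: "x ^ n \<in> principal (x ^ n)" unfolding principal_mem by (intro exI[of _ 1]) simp
  have fl2: "\<And>r m. (\<forall>i<(1::nat). m i \<in> principal (x ^ n)) \<and> (\<Sum>i<(1::nat). r i * m i) = 0 \<Longrightarrow>
     \<exists>(k::nat) A y. (\<forall>j<k. y j \<in> principal (x ^ n)) \<and> (\<forall>i<(1::nat). m i = (\<Sum>j<k. A i j * y j)) \<and>
       (\<forall>j<k. (\<Sum>i<(1::nat). r i * A i j) = 0)"
    using fl[unfolded flat_submodule_def, THEN spec[where x=1]] by blast
  have hyp: "(\<forall>i<(1::nat). x ^ n \<in> principal (x ^ n)) \<and> (\<Sum>i<(1::nat). f * x ^ n) = 0"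
    using xP xnf by simp
  obtain k :: nat and A y where
    ky: "\<forall>j<k. y j \<in> principal (x ^ n)" "\<forall>i<(1::nat). x ^ n = (\<Sum>j<k. A i j * y j)"
        "\<forall>j<k. (\<Sum>i<(1::nat). f * A i j) = 0"
    using fl2[of "\<lambda>_. x ^ n" "\<lambda>_. f", OF hyp] by blast
  define t where "t j = coef (x ^ n) (y j)" for j
  have yt: "j < k \<Longrightarrow> y j = t j * x ^ n" for j unfolding t_def using ky(1) coef by blast
  define w where "w = (\<Sum>j<k. A 0 j * t j)"
  have "x ^ n = (\<Sum>j<k. A 0 j * y j)" using ky(2) by simp
  also have "\<dots> = w * x ^ n" unfolding w_def sum_distrib_right
    by (intro sum.cong) (auto simp: yt mult.assoc)
  finally have xw: "x ^ n * (1 - w) = 0" by (simp add: algebra_simps)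
  have "f * w = (\<Sum>j<k. (f * A 0 j) * t j)" unfolding w_def sum_distrib_left by (simp add: mult.assoc)
  also have "\<dots> = 0" using ky(3) by simp
  finally have "w * f = 0" by (simp add: mult.commute)
  moreover have "(x * (1 - w)) ^ n = 0"
  proof -
    obtain n' where nn: "n = Suc n'" using n by (cases n) auto
    have "(x * (1 - w)) ^ n = x ^ n * (1 - w) ^ n" by (rule power_mult_distrib)
    also have "(1 - w) ^ n = (1 - w) * (1 - w) ^ n'" using nn by simp
    finally have "(x * (1 - w)) ^ n = (x ^ n * (1 - w)) * (1 - w) ^ n'" by (simp add: mult.assoc)
    thus ?thesis using xw by simp
  qed
  ultimately show ?thesis unfolding nilpotent_elt_def by blast
qed

lemma nzd_type:
  fixes f x :: "'a::comm_ring_1"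
  assumes q: "quasi_pf_ring TYPE('a)" and m: "prime_ideal m"
    and nn: "\<not> (\<exists>s k. s \<notin> m \<and> s * f ^ k = 0)" and x: "x * f ^ n = 0"
  shows "\<exists>s. s \<notin> m \<and> s * x = 0"
proof -
  have "f ^ n \<in> Ann x" using x by (simp add: Ann_def mult.commute)
  with q obtain g where g: "g * x = 0" "nilpotent_elt (f ^ n * (1 - g))"
    unfolding quasi_pf_ring_def quasi_pure_def Ann_def by blast
  show ?thesis
  proof (cases "g \<in> m")
    case False thus ?thesis using g by blast
  next
    case True
    obtain N where N: "(f ^ n * (1 - g)) ^ N = 0" using g(2) unfolding nilpotent_elt_def by blast
    have "(1 - g) ^ N * f ^ (n * N) = (f ^ n * (1 - g)) ^ N"
      by (simp add: power_mult_distrib power_mult[symmetric] mult.commute)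
    hence "(1 - g) ^ N * f ^ (n * N) = 0" using N by simp
    moreover have "(1 - g) ^ N \<notin> m" using prime_notin_pow[OF m prime_one_minus[OF m True]] .
    ultimately show ?thesis using nn by blast
  qed
qed



lemma pow_kill: "s * f ^ k = 0 \<Longrightarrow> k \<le> n \<Longrightarrow> s * (f::'a::comm_ring_1) ^ n = 0"
proof -
  assume a: "s * f ^ k = 0" "k \<le> n"
  have "f ^ n = f ^ k * f ^ (n - k)" using a(2) by (simp add: power_add[symmetric])
  hence "s * f ^ n = (s * f ^ k) * f ^ (n - k)" by (simp add: mult.assoc)
  thus ?thesis using a(1) by simp
qed

lemma fin_case:
  fixes f :: "'a::comm_ring_1"
  assumes fin: "finite {M::'a set. maximal_ideal M}" and q: "quasi_pf_ring TYPE('a)"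
  shows "\<exists>n\<ge>1. projective_submodule (principal (f ^ n))"
proof -
  define N where "N = {m \<in> {M::'a set. maximal_ideal M}. \<exists>s k. s \<notin> m \<and> s * f ^ k = 0}"
  have finN: "finite N" unfolding N_def using fin by simp
  define sk where "sk m = (SOME p. fst p \<notin> m \<and> fst p * f ^ snd p = 0)" for m :: "'a set"
  have sk: "fst (sk m) \<notin> m \<and> fst (sk m) * f ^ snd (sk m) = 0" if "m \<in> N" for m
  proof -
    from that obtain s k where "s \<notin> m" "s * f ^ k = 0" unfolding N_def by blast
    hence "\<exists>p. fst p \<notin> m \<and> fst p * f ^ snd p = 0" by (intro exI[of _ "(s, k)"]) simp
    thus ?thesis unfolding sk_def by (rule someI_ex)
  qed
  define n where "n = 1 + (\<Sum>m\<in>N. snd (sk m))"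
  have le: "m \<in> N \<Longrightarrow> snd (sk m) \<le> n" for m
    unfolding n_def using member_le_sum[of m N "\<lambda>m. snd (sk m)"] finN by simp
  define T where "T = (\<lambda>m. fst (sk m)) ` N"
  have T1: "finite T" unfolding T_def using finN by simp
  have T2: "\<forall>t\<in>T. t * f ^ n = 0" unfolding T_def using sk le pow_kill by blast
  have H: "(\<exists>t\<in>T. t \<notin> m) \<or> (\<forall>x. x * f ^ n = 0 \<longrightarrow> (\<exists>s. s \<notin> m \<and> s * x = 0))"
    if m: "maximal_ideal m" for m
  proof (cases "m \<in> N")
    case True thus ?thesis using sk unfolding T_def by blast
  next
    case False
    hence "\<not> (\<exists>s k. s \<notin> m \<and> s * f ^ k = 0)" using m unfolding N_def by blast
    thus ?thesis using nzd_type[OF q maximal_prime[OF m]] by blast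
  qed
  from main_idem[OF T1 T2 H] obtain u where "u * f ^ n = 0" "\<forall>x. x * f ^ n = 0 \<longrightarrow> x * (1 - u) = 0"
    by blast
  hence "projective_submodule (principal (f ^ n))" by (rule proj_of)
  moreover have "n \<ge> 1" unfolding n_def by simp
  ultimately show ?thesis by blast
qed

lemma min_case:
  fixes f :: "'a::comm_ring_1"
  assumes mq: "Min_quasi_compact TYPE('a)" and q: "quasi_pf_ring TYPE('a)"
  shows "\<exists>n\<ge>1. projective_submodule (principal (f ^ n))"
proof -
  define \<S> where "\<S> = insert {f} {{s} | s. \<exists>k. s * f ^ k = 0}"
  have cov: "\<forall>P. minimal_prime P \<longrightarrow> (\<exists>S\<in>\<S>. \<not> S \<subseteq> P)"
  proof (intro allI impI)
    fix P :: "'a set" assume P: "minimal_prime P"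
    show "\<exists>S\<in>\<S>. \<not> S \<subseteq> P"
    proof (cases "f \<in> P")
      case False thus ?thesis unfolding \<S>_def by blast
    next
      case True
      from minimal_prime_nil[OF P True] obtain s k where "s \<notin> P" "s * f ^ k = 0" by blast
      hence "{s} \<in> \<S>" "\<not> {s} \<subseteq> P" unfolding \<S>_def by blast+
      thus ?thesis by blast
    qed
  qed
  have "\<exists>F\<subseteq>\<S>. finite F \<and> (\<forall>P. minimal_prime P \<longrightarrow> (\<exists>S\<in>F. \<not> S \<subseteq> P))"
    using mp[OF spec[OF mq[unfolded Min_quasi_compact_def], of \<S>] cov] .
  then obtain F where F: "F \<subseteq> \<S>" "finite F" "\<forall>P. minimal_prime P \<longrightarrow> (\<exists>S\<in>F. \<not> S \<subseteq> P)"
    by blast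
  define F' where "F' = {s. {s} \<in> F \<and> (\<exists>k. s * f ^ k = 0)}"
  have "F' \<subseteq> the_elem ` F" unfolding F'_def by (force intro: image_eqI[of _ the_elem "{_}"])
  hence finF': "finite F'" using F(2) finite_subset by blast
  define ks where "ks s = (SOME k. s * f ^ k = 0)" for s
  have ks: "s \<in> F' \<Longrightarrow> s * f ^ ks s = 0" for s unfolding F'_def ks_def by (auto intro: someI_ex)
  define n where "n = 1 + (\<Sum>s\<in>F'. ks s)"
  have le: "s \<in> F' \<Longrightarrow> ks s \<le> n" for s
    unfolding n_def using member_le_sum[of s F' ks] finF' by simp
  have sn: "s \<in> F' \<Longrightarrow> s * f ^ n = 0" for s using ks le pow_kill by blast
  define gs where "gs s = (SOME g. g * f ^ n = 0 \<and> nilpotent_elt (s * (1 - g)))" for s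
  have gs: "gs s * f ^ n = 0 \<and> nilpotent_elt (s * (1 - gs s))" if s: "s \<in> F'" for s
  proof -
    have "s \<in> Ann (f ^ n)" using sn[OF s] by (simp add: Ann_def)
    with q have "\<exists>g. g * f ^ n = 0 \<and> nilpotent_elt (s * (1 - g))"
      unfolding quasi_pf_ring_def quasi_pure_def Ann_def by blast
    thus ?thesis unfolding gs_def by (rule someI_ex)
  qed
  define T where "T = gs ` F'"
  have T1: "finite T" unfolding T_def using finF' by simp
  have T2: "\<forall>t\<in>T. t * f ^ n = 0" unfolding T_def using gs by blast
  have H: "(\<exists>t\<in>T. t \<notin> m) \<or> (\<forall>x. x * f ^ n = 0 \<longrightarrow> (\<exists>s. s \<notin> m \<and> s * x = 0))"
    if m: "maximal_ideal m" for m
  proof (cases "\<exists>s k. s \<notin> m \<and> s * f ^ k = 0")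
    case False
    thus ?thesis using nzd_type[OF q maximal_prime[OF m]] by blast
  next
    case True
    then obtain s0 k0 where s0: "s0 \<notin> m" "s0 * f ^ k0 = 0" by blast
    have mp: "prime_ideal m" using maximal_prime[OF m] .
    obtain P where P: "minimal_prime P" "P \<subseteq> m" using exists_minimal_below[OF mp] by blast
    have PP: "prime_ideal P" using P(1) by (simp add: minimal_prime_def)
    have "s0 \<notin> P" using s0 P by blast
    moreover have "s0 * f ^ k0 \<in> P" using s0 ideal_zero PP by (metis prime_ideal_def)
    ultimately have "f ^ k0 \<in> P" using PP unfolding prime_ideal_def by blast
    hence fP: "f \<in> P" using prime_notin_pow[OF PP] by blast
    from F(3) P(1) obtain S where S: "S \<in> F" "\<not> S \<subseteq> P" by blast
    have "S \<in> \<S>" using S F(1) by blast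
    moreover have "S \<noteq> {f}" using S(2) fP by blast
    ultimately obtain s k where sk: "S = {s}" "s * f ^ k = 0" unfolding \<S>_def by blast
    have sF: "s \<in> F'" unfolding F'_def using sk S by blast
    have sP: "s \<notin> P" using S sk by blast
    have "gs s \<notin> m"
    proof
      assume "gs s \<in> m"
      hence "1 - gs s \<notin> m" using prime_one_minus[OF mp] by blast
      hence n1: "1 - gs s \<notin> P" using P by blast
      obtain N where "(s * (1 - gs s)) ^ N = 0" using gs[OF sF] unfolding nilpotent_elt_def by blast
      hence "s * (1 - gs s) \<in> P" using prime_nilp[OF PP] by blast
      thus False using n1 sP PP unfolding prime_ideal_def by blast
    qed
    thus ?thesis using sF unfolding T_def by blast
  qed
  from main_idem[OF T1 T2 H] obtain u where "u * f ^ n = 0" "\<forall>x. x * f ^ n = 0 \<longrightarrow> x * (1 - u) = 0"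
    by blast
  hence "projective_submodule (principal (f ^ n))" by (rule proj_of)
  moreover have "n \<ge> 1" unfolding n_def by simp
  ultimately show ?thesis by blast
qed

lemma GPP_GPF: "GPP_ring TYPE('a::comm_ring_1) \<Longrightarrow> GPF_ring TYPE('a)"
  unfolding GPP_ring_def GPF_ring_def using proj_imp flat_of by metis

lemma GPF_qpf: "GPF_ring TYPE('a::comm_ring_1) \<Longrightarrow> quasi_pf_ring TYPE('a)"
  unfolding GPF_ring_def quasi_pf_ring_def quasi_pure_def Ann_def
proof (intro allI ballI)
  fix f x :: 'a
  assume G: "\<forall>f::'a. \<exists>n\<ge>1. flat_submodule (principal (f ^ n))" and x: "x \<in> {x. x * f = 0}"
  from G obtain n where "n \<ge> 1" "flat_submodule (principal (x ^ n))" by blast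
  from flat_ann[OF this(2,1)] x show "\<exists>g\<in>{x. x * f = 0}. nilpotent_elt (x * (1 - g))" by auto
qed

theorem corollary5p5:
  assumes "finite {M :: 'a::comm_ring_1 set. maximal_ideal M} \<or> Min_quasi_compact TYPE('a)"
  shows "(GPP_ring TYPE('a) \<longleftrightarrow> GPF_ring TYPE('a)) \<and>
         (GPF_ring TYPE('a) \<longleftrightarrow> quasi_pf_ring TYPE('a))"
proof -
  have "quasi_pf_ring TYPE('a) \<Longrightarrow> GPP_ring TYPE('a)"
    unfolding GPP_ring_def using assms fin_case min_case by blast
  thus ?thesis using GPP_GPF GPF_qpf by blast
qed


end
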